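(* Let $a,b\in\mathbb{M}_2$ with $0\le a,b\le 1$, $a\ne0,1$ and $b\neq 0,1$. Then $a$ and $b$ are strict, absolutely compatible and satisfy $ab\ne ba$ if, and only if, the following three properties hold: (1) $\det(a)>0$ and $\det(b)>0$; (2) $\operatorname{trace}(a)=1=\operatorname{trace}(b)$; (3) $\det(a\circ b)=0$.
   Context: $\mathbb{M}_2$ is the algebra of $2\times2$ complex matrices; $\operatorname{trace}$ is the non-normalized trace. For $x\in\mathbb{M}_2$, $|x|=(x^*x)^{1/2}$; $a\circ b=\frac12(ab+ba)$. Elements $0\le a,b\le 1$ are absolutely compatible if $|a-b|+|1-a-b|=1$. For positive $x$, $r(x)$ is its range projection. For $0\le a\le 1$: $s(a)=1-r(1-a)$ and $n(a)=1-r(a)$; a non-zero $0\le a\le 1$ is strict if $s(a)=0=n(a)$. *)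

theory Defs
  imports "HOL-Analysis.Analysis" "HOL-Library.Complex_Order"
begin

type_synonym M2 = "complex^2^2"

definition adj :: "M2 \<Rightarrow> M2" where
  "adj x = (\<chi> i j. cnj (x $ j $ i))"

definition hermitian :: "M2 \<Rightarrow> bool" where
  "hermitian x \<longleftrightarrow> adj x = x"

definition psd :: "M2 \<Rightarrow> bool" where
  "psd x \<longleftrightarrow> hermitian x \<and>
     (\<forall>v :: complex^2. 0 \<le> (\<Sum>i\<in>UNIV. \<Sum>j\<in>UNIV. cnj (v $ i) * x $ i $ j * v $ j))"

definition effect :: "M2 \<Rightarrow> bool" where
  "effect a \<longleftrightarrow> psd a \<and> psd (mat 1 - a)"

definition mabs :: "M2 \<Rightarrow> M2" where
  "mabs x = (THE y. psd y \<and> y ** y = adj x ** x)"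

definition jprod :: "M2 \<Rightarrow> M2 \<Rightarrow> M2" where
  "jprod a b = (\<chi> i j. (a ** b + b ** a) $ i $ j / 2)"

definition abs_compatible :: "M2 \<Rightarrow> M2 \<Rightarrow> bool" where
  "abs_compatible a b \<longleftrightarrow> mabs (a - b) + mabs (mat 1 - a - b) = mat 1"

definition rproj :: "M2 \<Rightarrow> M2" where
  "rproj x = (THE p. p ** p = p \<and> hermitian p \<and> range ((*v) p) = range ((*v) x))"

definition sproj :: "M2 \<Rightarrow> M2" where
  "sproj a = mat 1 - rproj (mat 1 - a)"

definition nproj :: "M2 \<Rightarrow> M2" where
  "nproj a = mat 1 - rproj a"

definition strict :: "M2 \<Rightarrow> bool" where
  "strict a \<longleftrightarrow> effect a \<and> a \<noteq> 0 \<and> sproj a = 0 \<and> nproj a = 0"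

end

theory Submission imports Defs begin

definition P :: "real \<Rightarrow> real \<Rightarrow> real \<Rightarrow> real \<Rightarrow> M2" where
 "P m u v w = (\<chi> i j. if i = 1 then (if j = 1 then Complex (m+u) 0 else Complex v w)
      else (if j = 1 then Complex v (-w) else Complex (m-u) 0))"

lemma two_ne: "(2::2) \<noteq> 1" "(1::2) \<noteq> 2" by simp_all

lemma P_ent [simp]: "P m u v w $ 1 $ 1 = Complex (m+u) 0" "P m u v w $ 1 $ 2 = Complex v w"
  "P m u v w $ 2 $ 1 = Complex v (-w)" "P m u v w $ 2 $ 2 = Complex (m-u) 0"
  by (simp_all add: P_def)

lemma M2_eq: "(A::M2) = B \<longleftrightarrow> A$1$1 = B$1$1 \<and> A$1$2 = B$1$2 \<and> A$2$1 = B$2$1 \<and> A$2$2 = B$2$2"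
  by (auto simp: vec_eq_iff forall_2)

lemma mult_ent [simp]: "((A::M2) ** B) $ i $ j = A$i$1 * B$1$j + A$i$2 * B$2$j"
  by (simp add: matrix_matrix_mult_def sum_2)

lemma mat1_P: "(mat 1 :: M2) = P 1 0 0 0"
  by (simp add: M2_eq mat_def Complex_eq)

lemma zero_P: "(0 :: M2) = P 0 0 0 0"
  by (simp add: M2_eq Complex_eq)

lemma P_add: "P m u v w + P m2 u2 v2 w2 = P (m+m2) (u+u2) (v+v2) (w+w2)"
  by (simp add: M2_eq complex_eq_iff)
lemma P_diff: "P m u v w - P m2 u2 v2 w2 = P (m-m2) (u-u2) (v-v2) (w-w2)"
  by (simp add: M2_eq complex_eq_iff)

lemma P_eq_iff: "P m u v w = P m2 u2 v2 w2 \<longleftrightarrow> m = m2 \<and> u = u2 \<and> v = v2 \<and> w = w2"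
  by (auto simp: M2_eq complex_eq_iff)

lemma det_P: "det (P m u v w) = complex_of_real (m^2 - u^2 - v^2 - w^2)"
  by (simp add: det_2 complex_eq_iff power2_eq_square algebra_simps)

lemma trace_P: "trace (P m u v w) = complex_of_real (2 * m)"
  by (simp add: trace_def sum_2 complex_eq_iff)

lemma adj_P: "adj (P m u v w) = P m u v w"
  by (simp add: adj_def M2_eq complex_eq_iff)

lemma hermitian_P: "hermitian h \<Longrightarrow> h = P ((Re (h$1$1) + Re (h$2$2))/2) ((Re (h$1$1) - Re (h$2$2))/2) (Re (h$1$2)) (Im (h$1$2))"
proof -
  assume "hermitian h"
  then have e: "\<And>i j. cnj (h$j$i) = h$i$j"
    unfolding hermitian_def adj_def vec_eq_iff by auto
  from e[of 1 1] e[of 2 2] e[of 1 2] show ?thesis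
    by (simp add: M2_eq complex_eq_iff field_simps)
qed

lemma PP_comm: "P m u v w ** P m2 u2 v2 w2 = P m2 u2 v2 w2 ** P m u v w \<longleftrightarrow>
   v * w2 - w * v2 = 0 \<and> w * u2 - u * w2 = 0 \<and> u * v2 - v * u2 = 0"
  by (simp add: M2_eq complex_eq_iff) (auto simp: algebra_simps)

lemma jprod_P: "jprod (P m u v w) (P m2 u2 v2 w2) =
   P (m * m2 + u * u2 + v * v2 + w * w2) (m * u2 + m2 * u) (m * v2+m2 * v) (m * w2+m2 * w)"
  by (simp add: jprod_def M2_eq complex_eq_iff field_simps)

lemma PP_sq: "P m u v w ** P m u v w = P (m^2+u^2+v^2+w^2) (2 * m * u) (2 * m * v) (2 * m * w)"
  by (simp add: M2_eq complex_eq_iff algebra_simps power2_eq_square)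


definition Rf :: "real \<Rightarrow> real \<Rightarrow> real \<Rightarrow> real \<Rightarrow> real \<Rightarrow> real \<Rightarrow> real \<Rightarrow> real \<Rightarrow> real" where
  "Rf m u v w a b c d = (m+u) * (a^2+b^2) + (m-u) * (c^2+d^2) + 2 * (v * (a * c+b * d) + w * (b * c-a * d))"

lemma qf_P: "(\<Sum>i\<in>UNIV. \<Sum>j\<in>UNIV. cnj (x $ i) * P m u v w $ i $ j * x $ j) =
   complex_of_real (Rf m u v w (Re (x$1)) (Im (x$1)) (Re (x$2)) (Im (x$2)))"
  by (simp add: sum_2 complex_eq_iff Rf_def algebra_simps power2_eq_square)

definition vec2 :: "complex \<Rightarrow> complex \<Rightarrow> complex^2" where
  "vec2 z1 z2 = (\<chi> i. if i = 1 then z1 else z2)"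

lemma vec2_ent [simp]: "vec2 z1 z2 $ 1 = z1" "vec2 z1 z2 $ 2 = z2"
  by (simp_all add: vec2_def)

lemma R_nonneg:
  fixes p q v w a b c d :: real
  assumes "p \<ge> 0" "q \<ge> 0" "p * q \<ge> v^2+w^2"
  shows "0 \<le> p * (a^2+b^2)+q * (c^2+d^2)+2 * (v * (a * c+b * d)+w * (b * c-a * d))"
proof (cases "p = 0")
  case True
  then have "v^2+w^2 \<le> 0" using assms by simp
  then have "v = 0 \<and> w = 0" by (simp add: sum_power2_le_zero_iff)
  then show ?thesis using True assms by simp
next
  case False
  then have pp: "p > 0" using assms by simp
  have e: "p * (p * (a^2+b^2)+q * (c^2+d^2)+2 * (v * (a * c+b * d)+w * (b * c-a * d))) =
    (p * a + v * c - w * d)^2 + (p * b + w * c + v * d)^2 + (p * q - v^2 - w^2) * (c^2+d^2)"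
    by algebra
  have "0 \<le> (p * a + v * c - w * d)^2 + (p * b + w * c + v * d)^2 + (p * q - v^2 - w^2) * (c^2+d^2)"
    using assms by (intro add_nonneg_nonneg mult_nonneg_nonneg) auto
  then have "0 \<le> p * (p * (a^2+b^2)+q * (c^2+d^2)+2 * (v * (a * c+b * d)+w * (b * c-a * d)))"
    using e by simp
  then show ?thesis using pp by (metis mult_zero_right mult_le_cancel_left_pos)
qed

lemma psd_P: "psd (P m u v w) \<longleftrightarrow> sqrt (u^2+v^2+w^2) \<le> m"
proof
  assume ps: "psd (P m u v w)"
  have Q: "\<And>x::complex^2. 0 \<le> Rf m u v w (Re (x$1)) (Im (x$1)) (Re (x$2)) (Im (x$2))"
    using ps unfolding psd_def qf_P by (simp add: less_eq_complex_def)
  have p: "m + u \<ge> 0" using Q[of "vec2 1 0"] by (simp add: Rf_def)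
  have q: "m - u \<ge> 0" using Q[of "vec2 0 1"] by (simp add: Rf_def)
  have d1: "(m-u) * ((m+u) * (m-u) - v^2 - w^2) \<ge> 0"
    using Q[of "vec2 (Complex (m-u) 0) (Complex (-v) w)"] by (simp add: Rf_def algebra_simps power2_eq_square)
  have d2: "(m+u) * ((m+u) * (m-u) - v^2 - w^2) \<ge> 0"
    using Q[of "vec2 (Complex (-v) (-w)) (Complex (m+u) 0)"] by (simp add: Rf_def algebra_simps power2_eq_square)
  have m0: "m \<ge> 0" using p q by simp
  have S: "u^2+v^2+w^2 \<le> m^2"
  proof (cases "m = 0")
    case True
    then have u: "u = 0" using p q by simp
    have "0 \<le> -2 * (v^2+w^2)"
      using Q[of "vec2 (Complex (-v) (-w)) 1"] True u by (simp add: Rf_def algebra_simps power2_eq_square)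
    then have "v^2 + w^2 \<le> 0" by simp
    then show ?thesis using True u by simp
  next
    case False
    then have "m > 0" using m0 by simp
    have "2 * m * ((m+u) * (m-u) - v^2 - w^2) \<ge> 0" using d1 d2 by (simp add: algebra_simps)
    then have "(m+u) * (m-u) - v^2 - w^2 \<ge> 0" using \<open>m > 0\<close> by (simp add: zero_le_mult_iff)
    then show ?thesis by (simp add: algebra_simps power2_eq_square)
  qed
  have "sqrt (u^2+v^2+w^2) \<le> sqrt (m^2)" using S by (rule real_sqrt_le_mono)
  then show "sqrt (u^2+v^2+w^2) \<le> m" using m0 by simp
next
  assume a: "sqrt (u^2+v^2+w^2) \<le> m"
  have m0: "m \<ge> 0" using a by (meson order_trans real_sqrt_ge_zero add_nonneg_nonneg zero_le_power2)
  have S: "u^2+v^2+w^2 \<le> m^2"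
    using a by (metis add_nonneg_nonneg zero_le_power2 real_sqrt_pow2 power_mono real_sqrt_ge_zero)
  have "u^2 \<le> m^2" using S by (smt (verit) zero_le_power2)
  then have "sqrt (u^2) \<le> sqrt (m^2)" by (rule real_sqrt_le_mono)
  then have "\<bar>u\<bar> \<le> m" using m0 by simp
  then have p: "m+u \<ge> 0" and q: "m - u \<ge> 0" by auto
  have d: "(m+u) * (m-u) \<ge> v^2+w^2" using S by (simp add: algebra_simps power2_eq_square)
  have herm: "hermitian (P m u v w)" by (simp add: hermitian_def adj_P)
  have R: "\<And>a b c d. 0 \<le> Rf m u v w a b c d" unfolding Rf_def by (rule R_nonneg[OF p q d])
  show "psd (P m u v w)" unfolding psd_def
  proof (intro conjI allI herm)
    fix x :: "complex^2"
    show "0 \<le> (\<Sum>i\<in>UNIV. \<Sum>j\<in>UNIV. cnj (x $ i) * P m u v w $ i $ j * x $ j)"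
      unfolding qf_P using R[of "Re (x$1)" "Im (x$1)" "Re (x$2)" "Im (x$2)"]
      by (simp add: less_eq_complex_def)
  qed
qed


lemma adj_mult: "adj ((A::M2) ** B) = adj B ** adj A"
  by (simp add: adj_def M2_eq mult.commute)

lemma range_scale:
  fixes A B :: M2
  assumes "\<And>i j. B$i$j = c * A$i$j" "c \<noteq> 0"
  shows "range ((*v) B) = range ((*v) A)"
proof -
  have 1: "B *v y = A *v (c *s y)" for y
    using assms(1) by (simp add: vec_eq_iff matrix_vector_mult_def vector_scalar_mult_def sum_2 mult_ac)
  have 2: "A *v y = B *v ((1/c) *s y)" for y
    using assms by (simp add: vec_eq_iff matrix_vector_mult_def vector_scalar_mult_def sum_2 mult_ac)
  show ?thesis
  proof
    show "range ((*v) B) \<subseteq> range ((*v) A)" using 1 by auto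
    show "range ((*v) A) \<subseteq> range ((*v) B)" using 2 by auto
  qed
qed

lemma proj_fix:
  fixes p q :: M2
  assumes "p ** p = p" "range ((*v) q) = range ((*v) p)"
  shows "p ** q = q"
proof -
  have "(p ** q) *v y = q *v y" for y
  proof -
    have "q *v y \<in> range ((*v) p)" using assms(2) by blast
    then obtain z where z: "q *v y = p *v z" by blast
    have "(p ** q) *v y = p *v (p *v z)" by (simp add: z matrix_vector_mul_assoc[symmetric])
    also have "\<dots> = p *v z" by (simp add: matrix_vector_mul_assoc assms(1))
    finally show ?thesis using z by simp
  qed
  then show ?thesis by (simp add: matrix_eq)
qed

lemma proj_unique:
  fixes p q :: M2
  assumes "p ** p = p" "hermitian p" "q ** q = q" "hermitian q" "range ((*v) q) = range ((*v) p)"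
  shows "p = q"
proof -
  have pq: "p ** q = q" using proj_fix assms by blast
  have qp: "q ** p = p" using proj_fix[of q p] assms by simp
  have "q = adj q" using assms(4) by (simp add: hermitian_def)
  also have "\<dots> = adj (p ** q)" by (simp add: pq)
  also have "\<dots> = q ** p" using assms by (simp add: adj_mult hermitian_def)
  finally show ?thesis using qp by simp
qed

lemma surj_det:
  fixes x :: M2
  assumes "range ((*v) x) = UNIV"
  shows "det x \<noteq> 0"
proof -
  have "surj (\<lambda>y. x *v y)" using assms by simp
  then obtain B where "x ** B = mat 1" using matrix_right_invertible_surjective by blast
  then have "invertible x" using invertible_right_inverse by blast
  then show ?thesis using invertible_det_nz by blast
qed

lemma det_surj:
  fixes x :: M2
  assumes "det x \<noteq> 0"
  shows "range ((*v) x) = UNIV"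
proof -
  have "invertible x" using assms invertible_det_nz by blast
  then obtain B where "x ** B = mat 1" using invertible_right_inverse by blast
  then have "surj (\<lambda>y. x *v y)" using matrix_right_invertible_surjective by blast
  then show ?thesis by simp
qed

lemma herm_mat1: "hermitian (mat 1 :: M2)"
  by (simp add: hermitian_def mat1_P adj_P)

lemma rproj_inv:
  fixes x :: M2
  assumes "det x \<noteq> 0"
  shows "rproj x = mat 1"
  unfolding rproj_def
proof (rule the_equality)
  show "mat 1 ** mat 1 = (mat 1 :: M2) \<and> hermitian (mat 1 :: M2) \<and> range ((*v) (mat 1 :: M2)) = range ((*v) x)"
  proof -
    have "range ((*v) (mat 1 :: M2)) = UNIV" by (rule surjI[of _ id]) simp
    then show ?thesis using det_surj[OF assms] herm_mat1 by simp
  qed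
  fix p :: M2
  assume a: "p ** p = p \<and> hermitian p \<and> range ((*v) p) = range ((*v) x)"
  then have r: "range ((*v) p) = UNIV" using det_surj[OF assms] by simp
  have "p *v y = y" for y
  proof -
    obtain z where z: "y = p *v z" using r by (metis UNIV_I image_iff)
    have "p *v y = (p ** p) *v z" by (simp add: z matrix_vector_mul_assoc)
    then show ?thesis using a z by simp
  qed
  then show "p = mat 1" by (simp add: matrix_eq)
qed

lemma rproj_sing:
  fixes x :: M2
  assumes "hermitian x" "det x = 0"
  shows "rproj x \<noteq> mat 1"
proof -
  obtain m u v w where x: "x = P m u v w" using hermitian_P[OF assms(1)] by blast
  have S: "m^2 = u^2 + v^2 + w^2" using assms(2) unfolding x det_P of_real_eq_0_iff by simp
  obtain p0 where p0: "p0 ** p0 = p0" "hermitian p0" "range ((*v) p0) = range ((*v) x)"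
  proof (cases "m = 0")
    case True
    then have "u^2 + v^2 + w^2 = 0" using S by simp
    then have "u = 0" "v = 0" "w = 0" by (smt (verit) zero_le_power2 power_eq_0_iff)+
    then have "x = 0" using True x zero_P by simp
    have h0: "hermitian (0::M2)" by (simp only: hermitian_def zero_P adj_P)
    have z0: "(0::M2) ** 0 = 0" by (simp add: M2_eq)
    show ?thesis by (rule that[of 0]) (simp_all only: h0 z0 \<open>x = 0\<close>)
  next
    case False
    define p1 where "p1 = P (1/2) (u/(2 * m)) (v/(2 * m)) (w/(2 * m))"
    have "p1 ** p1 = p1" unfolding p1_def PP_sq P_eq_iff using False S
      by (simp add: field_simps power2_eq_square)
    moreover have "hermitian p1" by (simp add: p1_def hermitian_def adj_P)
    moreover have "range ((*v) p1) = range ((*v) x)"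
    proof (rule range_scale)
      show "p1 $ i $ j = complex_of_real (1/(2 * m)) * x $ i $ j" for i j
        unfolding p1_def x using False exhaust_2[of i] exhaust_2[of j]
        by (auto simp: complex_eq_iff field_simps)
      show "complex_of_real (1/(2 * m)) \<noteq> 0" using False by simp
    qed
    ultimately show ?thesis using that by blast
  qed
  have "rproj x = p0"
    unfolding rproj_def
  proof (rule the_equality)
    show "p0 ** p0 = p0 \<and> hermitian p0 \<and> range ((*v) p0) = range ((*v) x)" using p0 by simp
    fix p assume "p ** p = p \<and> hermitian p \<and> range ((*v) p) = range ((*v) x)"
    then show "p = p0" using proj_unique[of p p0] p0 by simp
  qed
  moreover have "range ((*v) p0) \<noteq> UNIV" using p0(3) surj_det assms(2) by metis
  ultimately show ?thesis by auto
qed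

lemma sq_unique:
  fixes n u v w n2 u2 v2 w2 :: real
  assumes h1: "sqrt (u^2+v^2+w^2) \<le> n" and h2: "sqrt (u2^2+v2^2+w2^2) \<le> n2"
    and e0: "n^2 + (u^2+v^2+w^2) = n2^2 + (u2^2+v2^2+w2^2)"
    and e1: "n * u = n2 * u2" and e2: "n * v = n2 * v2" and e3: "n * w = n2 * w2"
  shows "n = n2 \<and> u = u2 \<and> v = v2 \<and> w = w2"
proof -
  define B where "B = u^2+v^2+w^2"
  define B2 where "B2 = u2^2+v2^2+w2^2"
  have B0: "B \<ge> 0" "B2 \<ge> 0" unfolding B_def B2_def by simp_all
  have n0: "n \<ge> 0" using h1 by (meson order_trans real_sqrt_ge_zero add_nonneg_nonneg zero_le_power2)
  have n20: "n2 \<ge> 0" using h2 by (meson order_trans real_sqrt_ge_zero add_nonneg_nonneg zero_le_power2)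
  have AB: "B \<le> n^2" using h1 B0 unfolding B_def[symmetric] by (metis real_sqrt_pow2 power_mono real_sqrt_ge_zero)
  have AB2: "B2 \<le> n2^2" using h2 B0 unfolding B2_def[symmetric] by (metis real_sqrt_pow2 power_mono real_sqrt_ge_zero)
  have prod: "n^2 * B = n2^2 * B2"
  proof -
    have "n^2 * B = (n * u)^2 + (n * v)^2 + (n * w)^2" unfolding B_def by algebra
    also have "\<dots> = (n2 * u2)^2 + (n2 * v2)^2 + (n2 * w2)^2" using e1 e2 e3 by simp
    also have "\<dots> = n2^2 * B2" unfolding B2_def by algebra
    finally show ?thesis .
  qed
  have sum: "n^2 + B = n2^2 + B2" using e0 unfolding B_def B2_def .
  have "(n^2 - B)^2 = (n2^2 - B2)^2"
  proof -
    have "(n^2 - B)^2 = (n^2 + B)^2 - 4 * (n^2 * B)" by algebra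
    also have "\<dots> = (n2^2 + B2)^2 - 4 * (n2^2 * B2)" using prod sum by simp
    also have "\<dots> = (n2^2 - B2)^2" by algebra
    finally show ?thesis .
  qed
  then have "n^2 - B = n2^2 - B2" using AB AB2 by (simp add: power2_eq_iff_nonneg)
  then have "n^2 = n2^2" using sum by simp
  then have nn: "n = n2" using n0 n20 by (simp add: power2_eq_iff_nonneg)
  show ?thesis
  proof (cases "n = 0")
    case True
    then have "B \<le> 0" "B2 \<le> 0" using AB AB2 nn by simp_all
    then have "u = 0 \<and> v = 0 \<and> w = 0" "u2 = 0 \<and> v2 = 0 \<and> w2 = 0" unfolding B_def B2_def
      by (smt (verit) zero_le_power2 power_eq_0_iff)+
    then show ?thesis using nn by simp
  next
    case False
    then show ?thesis using nn e1 e2 e3 by simp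
  qed
qed

definition nrm :: "real \<Rightarrow> real \<Rightarrow> real \<Rightarrow> real" where
  "nrm u v w = sqrt (u^2 + v^2 + w^2)"
definition absM :: "real \<Rightarrow> real \<Rightarrow> real \<Rightarrow> real \<Rightarrow> real" where
  "absM m u v w = (if nrm u v w \<le> \<bar>m\<bar> then \<bar>m\<bar> else nrm u v w)"
definition absK :: "real \<Rightarrow> real \<Rightarrow> real \<Rightarrow> real \<Rightarrow> real" where
  "absK m u v w = (if nrm u v w \<le> \<bar>m\<bar> then sgn m else m / nrm u v w)"

lemma cand_facts:
  fixes m u v w :: real
  defines "k \<equiv> absK m u v w" and "M \<equiv> absM m u v w"
  shows "sqrt ((k * u)^2 + (k * v)^2 + (k * w)^2) \<le> M"
    and "M^2 + ((k * u)^2 + (k * v)^2 + (k * w)^2) = m^2 + (u^2+v^2+w^2)"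
    and "M * k = m"
proof -
  define S where "S = u^2+v^2+w^2"
  define r where "r = nrm u v w"
  have S0: "S \<ge> 0" unfolding S_def by simp
  have r: "r = sqrt S" "r \<ge> 0" "r^2 = S" using S0 unfolding r_def S_def nrm_def by simp_all
  have kS: "(k * u)^2 + (k * v)^2 + (k * w)^2 = k^2 * S" unfolding S_def by algebra
  have "sqrt (k^2 * S) \<le> M \<and> M^2 + k^2 * S = m^2 + S \<and> M * k = m"
  proof (cases "r \<le> \<bar>m\<bar>")
    case True
    then have kM: "k = sgn m" "M = \<bar>m\<bar>" unfolding k_def M_def absK_def absM_def r_def by simp_all
    show ?thesis
    proof (cases "m = 0")
      case True
      then have "r = 0" using \<open>r \<le> \<bar>m\<bar>\<close> r by simp
      then have "S = 0" using r by simp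
      then show ?thesis using kM True by simp
    next
      case False
      then have "k^2 = 1" using kM by (simp add: sgn_if)
      then show ?thesis using kM True r by (simp add: abs_mult_sgn)
    qed
  next
    case False
    then have kM: "k = m / r" "M = r" unfolding k_def M_def absK_def absM_def r_def by simp_all
    have rp: "r > 0" using False by simp
    have "sqrt (k^2 * S) = \<bar>k\<bar> * r" using r by (simp add: real_sqrt_mult)
    also have "\<dots> = \<bar>m\<bar>" using kM rp by simp
    finally have 1: "sqrt (k^2 * S) \<le> M" using False kM by simp
    have 3: "M * k = m" using kM rp by simp
    have "m^2 = (M * k)^2" using 3 by simp
    also have "\<dots> = M^2 * k^2" by (simp add: power_mult_distrib)
    also have "\<dots> = k^2 * S" using kM(2) r(3) by simp
    finally have 2: "M^2 + k^2 * S = m^2 + S" using kM(2) r(3) by simp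
    show ?thesis using 1 2 3 by simp
  qed
  then show "sqrt ((k * u)^2 + (k * v)^2 + (k * w)^2) \<le> M"
    and "M^2 + ((k * u)^2 + (k * v)^2 + (k * w)^2) = m^2 + (u^2+v^2+w^2)"
    and "M * k = m" using kS unfolding S_def by simp_all
qed

lemma mabs_P: "mabs (P m u v w) = P (absM m u v w) (absK m u v w * u) (absK m u v w * v) (absK m u v w * w)"
proof -
  define k where "k = absK m u v w"
  define M where "M = absM m u v w"
  note cf = cand_facts[of m u v w, folded k_def M_def]
  have sqh: "adj (P m u v w) ** P m u v w = P (m^2+u^2+v^2+w^2) (2 * m * u) (2 * m * v) (2 * m * w)"
    by (simp add: adj_P PP_sq)
  have c1: "psd (P M (k * u) (k * v) (k * w))" using cf(1) by (simp add: psd_P)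
  have c2: "P M (k * u) (k * v) (k * w) ** P M (k * u) (k * v) (k * w) = adj (P m u v w) ** P m u v w"
    unfolding sqh PP_sq P_eq_iff using cf(2,3)
    by (simp add: algebra_simps)
  show ?thesis unfolding mabs_def k_def[symmetric] M_def[symmetric]
  proof (rule the_equality)
    show "psd (P M (k * u) (k * v) (k * w)) \<and> P M (k * u) (k * v) (k * w) ** P M (k * u) (k * v) (k * w) = adj (P m u v w) ** P m u v w"
      using c1 c2 by simp
    fix y assume a: "psd y \<and> y ** y = adj (P m u v w) ** P m u v w"
    then have hy: "hermitian y" using psd_def by blast
    obtain n u2 v2 w2 where y: "y = P n u2 v2 w2" using hermitian_P[OF hy] by blast
    have py: "sqrt (u2^2+v2^2+w2^2) \<le> n" using a y psd_P by simp
    have eq: "P n u2 v2 w2 ** P n u2 v2 w2 = P M (k * u) (k * v) (k * w) ** P M (k * u) (k * v) (k * w)"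
      using a c2 y by simp
    then have "n^2 + (u2^2+v2^2+w2^2) = M^2 + ((k * u)^2 + (k * v)^2 + (k * w)^2)"
      "n * u2 = M * (k * u)" "n * v2 = M * (k * v)" "n * w2 = M * (k * w)"
      unfolding PP_sq P_eq_iff by (simp_all add: algebra_simps)
    then have "n = M \<and> u2 = k * u \<and> v2 = k * v \<and> w2 = k * w" by (rule sq_unique[OF py cf(1)])
    then show "y = P M (k * u) (k * v) (k * w)" using y by simp
  qed
qed

lemma nrm_ge0: "nrm u v w \<ge> 0" by (simp add: nrm_def)

lemma absK0: "absK m u v w = 0 \<longleftrightarrow> m = 0"
proof (cases "nrm u v w \<le> \<bar>m\<bar>")
  case True then show ?thesis by (simp add: absK_def sgn_if)
next
  case False
  then have "nrm u v w > 0" by (smt (verit))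
  then show ?thesis using False by (simp add: absK_def)
qed

lemma absM0: "absM 0 u v w = nrm u v w"
  using nrm_ge0[of u v w] by (simp add: absM_def)

lemma nrm_sq: "(nrm u v w)^2 = u^2+v^2+w^2" by (simp add: nrm_def)

lemma nrm_le: "nrm u v w \<le> s \<Longrightarrow> u^2+v^2+w^2 \<le> s^2"
  by (metis nrm_ge0 nrm_sq power_mono)

lemma cross_kill:
  fixes p q x y x2 y2 :: real
  assumes "p * x = q * y" "p * x2 = q * y2"
  shows "p * (x * y2 - x2 * y) = 0 \<and> q * (x * y2 - x2 * y) = 0"
proof
  have "p * (x * y2 - x2 * y) = (p * x) * y2 - (p * x2) * y" by (simp add: algebra_simps)
  also have "\<dots> = (q * y) * y2 - (q * y2) * y" by (simp only: assms)
  finally show "p * (x * y2 - x2 * y) = 0" by simp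
  have "q * (x * y2 - x2 * y) = x * (q * y2) - x2 * (q * y)" by (simp add: algebra_simps)
  also have "\<dots> = x * (p * x2) - x2 * (p * x)" by (simp only: assms)
  finally show "q * (x * y2 - x2 * y) = 0" by simp
qed

lemma main_real:
  fixes s a1 a2 a3 t b1 b2 b3 :: real
  assumes ea: "nrm a1 a2 a3 \<le> s" "nrm a1 a2 a3 \<le> 1 - s"
    and eb: "nrm b1 b2 b3 \<le> t" "nrm b1 b2 b3 \<le> 1 - t"
  shows "(s^2 - a1^2 - a2^2 - a3^2 \<noteq> 0 \<and> (1-s)^2 - a1^2 - a2^2 - a3^2 \<noteq> 0 \<and>
          t^2 - b1^2 - b2^2 - b3^2 \<noteq> 0 \<and> (1-t)^2 - b1^2 - b2^2 - b3^2 \<noteq> 0 \<and>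
    absM (s-t) (a1-b1) (a2-b2) (a3-b3) + absM (1-s-t) (-a1-b1) (-a2-b2) (-a3-b3) = 1 \<and>
    absK (s-t) (a1-b1) (a2-b2) (a3-b3) * (a1-b1) + absK (1-s-t) (-a1-b1) (-a2-b2) (-a3-b3) * (-a1-b1) = 0 \<and>
    absK (s-t) (a1-b1) (a2-b2) (a3-b3) * (a2-b2) + absK (1-s-t) (-a1-b1) (-a2-b2) (-a3-b3) * (-a2-b2) = 0 \<and>
    absK (s-t) (a1-b1) (a2-b2) (a3-b3) * (a3-b3) + absK (1-s-t) (-a1-b1) (-a2-b2) (-a3-b3) * (-a3-b3) = 0 \<and>
    \<not> (a2 * b3 - a3 * b2 = 0 \<and> a3 * b1 - a1 * b3 = 0 \<and> a1 * b2 - a2 * b1 = 0))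
  \<longleftrightarrow> (0 < s^2 - a1^2 - a2^2 - a3^2 \<and> 0 < t^2 - b1^2 - b2^2 - b3^2 \<and> 2 * s = 1 \<and> 2 * t = 1 \<and>
     (s * t + a1 * b1 + a2 * b2 + a3 * b3)^2 - (s * b1 + t * a1)^2 - (s * b2 + t * a2)^2 - (s * b3 + t * a3)^2 = 0)"
    (is "?L \<longleftrightarrow> ?R")
proof -
  define A where "A = a1^2 + a2^2 + a3^2"
  define B where "B = b1^2 + b2^2 + b3^2"
  define W where "W = (a1-b1)^2 + (a2-b2)^2 + (a3-b3)^2"
  define U where "U = (-a1-b1)^2 + (-a2-b2)^2 + (-a3-b3)^2"
  define w where "w = nrm (a1-b1) (a2-b2) (a3-b3)"
  define u where "u = nrm (-a1-b1) (-a2-b2) (-a3-b3)"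
  have w: "w \<ge> 0" "w^2 = W" unfolding w_def W_def by (simp_all add: nrm_ge0 nrm_sq)
  have u: "u \<ge> 0" "u^2 = U" unfolding u_def U_def by (simp_all add: nrm_ge0 nrm_sq)
  have As: "A \<le> s^2" "A \<le> (1-s)^2" unfolding A_def using ea by (simp_all add: nrm_le)
  have Bs: "B \<le> t^2" "B \<le> (1-t)^2" unfolding B_def using eb by (simp_all add: nrm_le)
  have s0: "s \<ge> 0" "1 - s \<ge> 0" using ea nrm_ge0[of a1 a2 a3] by linarith+
  have t0: "t \<ge> 0" "1 - t \<ge> 0" using eb nrm_ge0[of b1 b2 b3] by linarith+
  have par: "U + W = 2 * A + 2 * B" unfolding U_def W_def A_def B_def by algebra
  have dot: "4 * (a1 * b1 + a2 * b2 + a3 * b3) = U - W" unfolding U_def W_def by algebra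
  have half_J: "s = 1/2 \<Longrightarrow> t = 1/2 \<Longrightarrow>
     (s * t + a1 * b1 + a2 * b2 + a3 * b3)^2 - (s * b1 + t * a1)^2 - (s * b2 + t * a2)^2 - (s * b3 + t * a3)^2
     = ((1 + U - W)^2 - 4 * U) / 16"
  proof -
    assume "s = 1/2" "t = 1/2"
    then show ?thesis unfolding U_def W_def by (simp add: field_simps) algebra
  qed
  show ?thesis
  proof
    assume L: ?L
    define k1 where "k1 = absK (s-t) (a1-b1) (a2-b2) (a3-b3)"
    define k2 where "k2 = absK (1-s-t) (-a1-b1) (-a2-b2) (-a3-b3)"
    have e1: "(k1 - k2) * a1 = (k1 + k2) * b1" using L unfolding k1_def[symmetric] k2_def[symmetric]
      by (simp add: algebra_simps)
    have e2: "(k1 - k2) * a2 = (k1 + k2) * b2" using L unfolding k1_def[symmetric] k2_def[symmetric]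
      by (simp add: algebra_simps)
    have e3: "(k1 - k2) * a3 = (k1 + k2) * b3" using L unfolding k1_def[symmetric] k2_def[symmetric]
      by (simp add: algebra_simps)
    have c: "\<not> (a2 * b3 - a3 * b2 = 0 \<and> a3 * b1 - a1 * b3 = 0 \<and> a1 * b2 - a2 * b1 = 0)" using L by blast
    have "k1 - k2 = 0 \<and> k1 + k2 = 0"
      using cross_kill[OF e2 e3] cross_kill[OF e3 e1] cross_kill[OF e1 e2] c by auto
    then have "k1 = 0" "k2 = 0" by auto
    then have st: "s - t = 0" "1 - s - t = 0" unfolding k1_def k2_def absK0 by auto
    then have sh: "s = 1/2" "t = 1/2" by auto
    have "w + u = 1" using L st unfolding w_def u_def by (simp add: absM0)
    then have wu: "w = 1 - u" by simp
    have J: "(1 + U - W) = 2 * u"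
    proof -
      have "1 + U - W = 1 + (u - w) * (u + w)" using u w by (simp add: algebra_simps power2_eq_square)
      then show ?thesis using wu by simp
    qed
    have "(s * t + a1 * b1 + a2 * b2 + a3 * b3)^2 - (s * b1 + t * a1)^2 - (s * b2 + t * a2)^2 - (s * b3 + t * a3)^2 = 0"
      using half_J[OF sh] J u by (simp add: power2_eq_square)
    moreover have "0 < s^2 - a1^2 - a2^2 - a3^2" using L As unfolding A_def by auto
    moreover have "0 < t^2 - b1^2 - b2^2 - b3^2" using L Bs unfolding B_def by auto
    moreover have "2 * s = 1" "2 * t = 1" using sh by simp_all
    ultimately show ?R by blast
  next
    assume R: ?R
    then have sh: "s = 1/2" "t = 1/2" by auto
    have A4: "A < 1/4" using R sh unfolding A_def by (simp add: power2_eq_square)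
    have B4: "B < 1/4" using R sh unfolding B_def by (simp add: power2_eq_square)
    have UW1: "U + W < 1" using par A4 B4 by simp
    have J0: "(1 + U - W)^2 = 4 * U" using R half_J[OF sh] by simp
    have u1: "u < 1"
    proof -
      have "u^2 < 1" using u(2) UW1 w(2) by (smt (verit) zero_le_power2)
      then show ?thesis using u(1) by (smt (verit) one_le_power)
    qed
    have "(1 + u^2 - w^2)^2 = (2 * u)^2" using J0 u w by (simp add: power_mult_distrib)
    then have "1 + u^2 - w^2 = 2 * u \<or> 1 + u^2 - w^2 = - (2 * u)" by (rule power2_eq_iff[THEN iffD1])
    then have wu: "w + u = 1"
    proof
      assume "1 + u^2 - w^2 = 2 * u"
      then have "w^2 = (1 - u)^2" by (simp add: algebra_simps power2_eq_square)
      then have "w = 1 - u" using w(1) u1 by (simp add: power2_eq_iff_nonneg)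
      then show ?thesis by simp
    next
      assume "1 + u^2 - w^2 = - (2 * u)"
      then have "w^2 = (1 + u)^2" by (simp add: algebra_simps power2_eq_square)
      then have "w = 1 + u" using w(1) u(1) by (simp add: power2_eq_iff_nonneg)
      then have "w^2 \<ge> 1" using u(1) by (smt (verit) one_le_power)
      then show ?thesis using w(2) UW1 u(2) by (smt (verit) zero_le_power2)
    qed
    have nc: "\<not> (a2 * b3 - a3 * b2 = 0 \<and> a3 * b1 - a1 * b3 = 0 \<and> a1 * b2 - a2 * b1 = 0)"
    proof
      assume c: "a2 * b3 - a3 * b2 = 0 \<and> a3 * b1 - a1 * b3 = 0 \<and> a1 * b2 - a2 * b1 = 0"
      define D where "D = a1 * b1 + a2 * b2 + a3 * b3"
      have lag: "A * B - D^2 = (a2 * b3 - a3 * b2)^2 + (a3 * b1 - a1 * b3)^2 + (a1 * b2 - a2 * b1)^2"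
        unfolding A_def B_def D_def by algebra
      then have DAB: "D^2 = A * B" using c by simp
      have "U * W = (A + B)^2 - 4 * D^2" unfolding U_def W_def A_def B_def D_def by algebra
      then have "U * W = (A - B)^2" using DAB by (simp add: algebra_simps power2_eq_square)
      then have "(u * w)^2 = (A - B)^2" using u w by (simp add: power_mult_distrib)
      then have "u * w = \<bar>A - B\<bar>" using u(1) w(1) by (metis abs_ge_zero mult_nonneg_nonneg power2_eq_iff_nonneg power2_abs)
      then have "(u + w)^2 = 2 * A + 2 * B + 2 * \<bar>A - B\<bar>" using u w par by (simp add: algebra_simps power2_eq_square)
      also have "\<dots> < 1" using A4 B4 by (simp add: abs_if)
      finally show False using wu by (simp add: add.commute)
    qed
    have L1: "s^2 - a1^2 - a2^2 - a3^2 \<noteq> 0" "t^2 - b1^2 - b2^2 - b3^2 \<noteq> 0" using R by auto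
    have L2: "(1-s)^2 - a1^2 - a2^2 - a3^2 \<noteq> 0" "(1-t)^2 - b1^2 - b2^2 - b3^2 \<noteq> 0"
    proof -
      have e: "1 - s = s" "1 - t = t" using sh by simp_all
      show "(1-s)^2 - a1^2 - a2^2 - a3^2 \<noteq> 0" "(1-t)^2 - b1^2 - b2^2 - b3^2 \<noteq> 0"
        unfolding e by (rule L1(1), rule L1(2))
    qed
    have z: "s - t = 0" "1 - s - t = 0" using sh by simp_all
    have k0: "absK 0 x y zz = 0" for x y zz by (simp add: absK0)
    show ?L unfolding z absM0 k0 using L1 L2 nc wu unfolding w_def u_def by (simp add: add.commute)
  qed
qed

lemma nrm_neg: "nrm (-x) (-y) (-z) = nrm x y z" by (simp add: nrm_def)

lemma rproj_iff: "hermitian x \<Longrightarrow> rproj x = mat 1 \<longleftrightarrow> det x \<noteq> 0"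
  using rproj_inv rproj_sing by blast

lemma mat1_minus: "mat 1 - P s a1 a2 a3 = P (1-s) (-a1) (-a2) (-a3)"
  by (simp add: mat1_P P_diff)

lemma effect_P: "effect (P s a1 a2 a3) \<longleftrightarrow> nrm a1 a2 a3 \<le> s \<and> nrm a1 a2 a3 \<le> 1 - s"
  unfolding effect_def mat1_minus psd_P nrm_def[symmetric] nrm_neg ..

lemma strict_P:
  assumes "effect (P s a1 a2 a3)" "P s a1 a2 a3 \<noteq> 0"
  shows "strict (P s a1 a2 a3) \<longleftrightarrow> s^2 - a1^2 - a2^2 - a3^2 \<noteq> 0 \<and> (1-s)^2 - a1^2 - a2^2 - a3^2 \<noteq> 0"
proof -
  have h1: "hermitian (P s a1 a2 a3)" by (simp add: hermitian_def adj_P)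
  have h2: "hermitian (mat 1 - P s a1 a2 a3)" by (simp add: mat1_minus hermitian_def adj_P)
  have "sproj (P s a1 a2 a3) = 0 \<longleftrightarrow> det (mat 1 - P s a1 a2 a3) \<noteq> 0"
    unfolding sproj_def using rproj_iff[OF h2] by (metis eq_iff_diff_eq_0)
  moreover have "nproj (P s a1 a2 a3) = 0 \<longleftrightarrow> det (P s a1 a2 a3) \<noteq> 0"
    unfolding nproj_def using rproj_iff[OF h1] by (metis eq_iff_diff_eq_0)
  ultimately show ?thesis using assms unfolding strict_def mat1_minus det_P of_real_eq_0_iff by auto
qed

lemma compat_P: "abs_compatible (P s a1 a2 a3) (P t b1 b2 b3) \<longleftrightarrow>
    absM (s-t) (a1-b1) (a2-b2) (a3-b3) + absM (1-s-t) (-a1-b1) (-a2-b2) (-a3-b3) = 1 \<and>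
    absK (s-t) (a1-b1) (a2-b2) (a3-b3) * (a1-b1) + absK (1-s-t) (-a1-b1) (-a2-b2) (-a3-b3) * (-a1-b1) = 0 \<and>
    absK (s-t) (a1-b1) (a2-b2) (a3-b3) * (a2-b2) + absK (1-s-t) (-a1-b1) (-a2-b2) (-a3-b3) * (-a2-b2) = 0 \<and>
    absK (s-t) (a1-b1) (a2-b2) (a3-b3) * (a3-b3) + absK (1-s-t) (-a1-b1) (-a2-b2) (-a3-b3) * (-a3-b3) = 0"
proof -
  have e1: "P s a1 a2 a3 - P t b1 b2 b3 = P (s-t) (a1-b1) (a2-b2) (a3-b3)" by (rule P_diff)
  have e2: "mat 1 - P s a1 a2 a3 - P t b1 b2 b3 = P (1-s-t) (-a1-b1) (-a2-b2) (-a3-b3)"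
    by (simp add: mat1_minus P_diff)
  show ?thesis unfolding abs_compatible_def e1 e2 unfolding mabs_P P_add mat1_P P_eq_iff by simp
qed

theorem theorem3p3:
  fixes a b :: M2
  assumes "effect a" "effect b"
    and "a \<noteq> 0" "a \<noteq> mat 1" "b \<noteq> 0" "b \<noteq> mat 1"
  shows "(strict a \<and> strict b \<and> abs_compatible a b \<and> a ** b \<noteq> b ** a) \<longleftrightarrow>
         (0 < det a \<and> 0 < det b \<and> trace a = 1 \<and> trace b = 1 \<and> det (jprod a b) = 0)"
proof -
  have "hermitian a" using assms(1) by (simp add: effect_def psd_def)
  then obtain s a1 a2 a3 where a: "a = P s a1 a2 a3" using hermitian_P by blast
  have "hermitian b" using assms(2) by (simp add: effect_def psd_def)
  then obtain t b1 b2 b3 where b: "b = P t b1 b2 b3" using hermitian_P by blast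
  have ea: "nrm a1 a2 a3 \<le> s" "nrm a1 a2 a3 \<le> 1 - s" using assms(1) unfolding a effect_P by simp_all
  have eb: "nrm b1 b2 b3 \<le> t" "nrm b1 b2 b3 \<le> 1 - t" using assms(2) unfolding b effect_P by simp_all
  have sa: "strict a \<longleftrightarrow> s^2 - a1^2 - a2^2 - a3^2 \<noteq> 0 \<and> (1-s)^2 - a1^2 - a2^2 - a3^2 \<noteq> 0"
    using strict_P assms(1,3) a by simp
  have sb: "strict b \<longleftrightarrow> t^2 - b1^2 - b2^2 - b3^2 \<noteq> 0 \<and> (1-t)^2 - b1^2 - b2^2 - b3^2 \<noteq> 0"
    using strict_P assms(2,5) b by simp
  have cm: "a ** b \<noteq> b ** a \<longleftrightarrow> \<not> (a2 * b3 - a3 * b2 = 0 \<and> a3 * b1 - a1 * b3 = 0 \<and> a1 * b2 - a2 * b1 = 0)"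
    unfolding a b PP_comm ..
  have r1: "0 < det a \<longleftrightarrow> 0 < s^2 - a1^2 - a2^2 - a3^2" unfolding a det_P by (simp add: less_complex_def)
  have r2: "0 < det b \<longleftrightarrow> 0 < t^2 - b1^2 - b2^2 - b3^2" unfolding b det_P by (simp add: less_complex_def)
  have r3: "trace a = 1 \<longleftrightarrow> 2 * s = 1" unfolding a trace_P
    by (metis of_real_1 of_real_eq_iff)
  have r4: "trace b = 1 \<longleftrightarrow> 2 * t = 1" unfolding b trace_P
    by (metis of_real_1 of_real_eq_iff)
  have r5: "det (jprod a b) = 0 \<longleftrightarrow>
     (s * t + a1 * b1 + a2 * b2 + a3 * b3)^2 - (s * b1 + t * a1)^2 - (s * b2 + t * a2)^2 - (s * b3 + t * a3)^2 = 0"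
    unfolding a b jprod_P det_P of_real_eq_0_iff by (simp add: algebra_simps)
  show ?thesis
    unfolding sa sb cm r1 r2 r3 r4 r5 unfolding a b compat_P
    using main_real[OF ea eb] by simp
qed

end
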